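(* Let $(X,\tau)$ be a Tychonoff, extremally disconnected space. Then for every ideal $\mathcal{P}$ of closed subsets of $X$, the space $(X,\tau,\mathcal{P})$ is $\tau\mathcal{P}$-zero-dimensional.
   Context: An ideal $\mathcal{P}$ of closed subsets of $X$ is a nonempty family of closed sets closed under finite unions and under taking closed subsets. For $f\colon X\to\mathbb{R}$, $D_f$ denotes the set of points of discontinuity of $f$, and $C(X)_\mathcal{P}=\{f\colon X\to\mathbb{R} : \overline{D_f}\in\mathcal{P}\}$. For $f\in C(X)_\mathcal{P}$, $Z_\mathcal{P}(f)=\{x: f(x)=0\}$. A set $U\subseteq X$ is $\tau\mathcal{P}$-clopen if $U=Z_\mathcal{P}(f)=X\setminus Z_\mathcal{P}(g)$ for some $f,g\in C(X)_\mathcal{P}$. Sets $A,B\subseteq X$ are $\mathcal{P}$-completely separated if there is $f\in C(X)_\mathcal{P}$ with $f(A)\subseteq\{0\}$ and $f(B)\subseteq\{1\}$. $(X,\tau,\mathcal{P})$ is $\tau\mathcal{P}$-zero-dimensional if for every pair of $\mathcal{P}$-completely separated sets $A,B\subseteq X$ there is a $\tau\mathcal{P}$-clopen $U$ with $A\subseteq U\subseteq X\setminus B$. *)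

theory Defs
  imports "HOL-Analysis.Analysis"
begin

definition Tychonoff_space :: "'a topology \<Rightarrow> bool" where
  "Tychonoff_space X \<longleftrightarrow> completely_regular_space X \<and> t1_space X"

definition extremally_disconnected :: "'a topology \<Rightarrow> bool" where
  "extremally_disconnected X \<longleftrightarrow> (\<forall>U. openin X U \<longrightarrow> openin X (X closure_of U))"

definition closed_ideal :: "'a topology \<Rightarrow> 'a set set \<Rightarrow> bool" where
  "closed_ideal X P \<longleftrightarrow> P \<noteq> {} \<and> (\<forall>A\<in>P. closedin X A)
     \<and> (\<forall>A\<in>P. \<forall>B\<in>P. A \<union> B \<in> P)
     \<and> (\<forall>A\<in>P. \<forall>B. closedin X B \<and> B \<subseteq> A \<longrightarrow> B \<in> P)"

definition continuous_at_pt :: "'a topology \<Rightarrow> ('a \<Rightarrow> real) \<Rightarrow> 'a \<Rightarrow> bool" where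
  "continuous_at_pt X f x \<longleftrightarrow>
     (\<forall>V. open V \<and> f x \<in> V \<longrightarrow> (\<exists>U. openin X U \<and> x \<in> U \<and> f ` U \<subseteq> V))"

definition discont_set :: "'a topology \<Rightarrow> ('a \<Rightarrow> real) \<Rightarrow> 'a set" where
  "discont_set X f = {x \<in> topspace X. \<not> continuous_at_pt X f x}"

text \<open>C(X)_P (functions are only considered on topspace X).\<close>
definition CP :: "'a topology \<Rightarrow> 'a set set \<Rightarrow> ('a \<Rightarrow> real) set" where
  "CP X P = {f. X closure_of (discont_set X f) \<in> P}"

definition ZP :: "'a topology \<Rightarrow> ('a \<Rightarrow> real) \<Rightarrow> 'a set" where
  "ZP X f = {x \<in> topspace X. f x = 0}"

definition tauP_clopen :: "'a topology \<Rightarrow> 'a set set \<Rightarrow> 'a set \<Rightarrow> bool" where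
  "tauP_clopen X P U \<longleftrightarrow>
     (\<exists>f\<in>CP X P. \<exists>g\<in>CP X P. U = ZP X f \<and> U = topspace X - ZP X g)"

definition P_completely_separated :: "'a topology \<Rightarrow> 'a set set \<Rightarrow> 'a set \<Rightarrow> 'a set \<Rightarrow> bool" where
  "P_completely_separated X P A B \<longleftrightarrow>
     (\<exists>f\<in>CP X P. f ` A \<subseteq> {0} \<and> f ` B \<subseteq> {1})"

definition tauP_zero_dimensional :: "'a topology \<Rightarrow> 'a set set \<Rightarrow> bool" where
  "tauP_zero_dimensional X P \<longleftrightarrow>
     (\<forall>A B. A \<subseteq> topspace X \<and> B \<subseteq> topspace X \<and> P_completely_separated X P A B
        \<longrightarrow> (\<exists>U. tauP_clopen X P U \<and> A \<subseteq> U \<and> U \<subseteq> topspace X - B))"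

end

theory Submission
  imports Defs
begin

lemma const_cont:
  assumes "openin X W" "x \<in> W" "\<And>y. y \<in> W \<Longrightarrow> h y = h x"
  shows "continuous_at_pt X h x"
  unfolding continuous_at_pt_def
proof (intro allI impI)
  fix V :: "real set" assume V: "open V \<and> h x \<in> V"
  have "h ` W \<subseteq> V" using assms(3) V by auto
  thus "\<exists>U. openin X U \<and> x \<in> U \<and> h ` U \<subseteq> V" using assms(1,2) by blast
qed

theorem theorem3p3:
  fixes X :: "'a topology"
  assumes "Tychonoff_space X" and "extremally_disconnected X"
  shows "\<forall>P. closed_ideal X P \<longrightarrow> tauP_zero_dimensional X P"
proof (intro allI impI)
  fix P assume cP: "closed_ideal X P"
  show "tauP_zero_dimensional X P"
    unfolding tauP_zero_dimensional_def
  proof (intro allI impI)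
    fix A B assume AB: "A \<subseteq> topspace X \<and> B \<subseteq> topspace X \<and> P_completely_separated X P A B"
    then obtain f where fP: "f \<in> CP X P" and fA: "f ` A \<subseteq> {0}" and fB: "f ` B \<subseteq> {1}"
      unfolding P_completely_separated_def by blast
    define D where "D = X closure_of discont_set X f"
    have DP: "D \<in> P" using fP unfolding CP_def D_def by simp
    have Dc: "closedin X D" unfolding D_def by simp
    have Dsub: "discont_set X f \<subseteq> D" unfolding D_def
      by (rule closure_of_subset) (auto simp: discont_set_def)
    define Opn where "Opn = topspace X - D"
    have Oo: "openin X Opn" unfolding Opn_def using Dc by auto
    have contO: "continuous_at_pt X f x" if "x \<in> Opn" for x
      using that Dsub unfolding Opn_def discont_set_def by auto
    define G where "G = {x \<in> Opn. f x < 1/2}"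
    have Go: "openin X G"
    proof (subst openin_subopen, intro ballI)
      fix x assume x: "x \<in> G"
      then obtain W where W: "openin X W" "x \<in> W" "f ` W \<subseteq> {..<1/2}"
        using contO[of x] unfolding continuous_at_pt_def G_def
        by (metis (no_types, lifting) lessThan_iff mem_Collect_eq open_lessThan)
      show "\<exists>T. openin X T \<and> x \<in> T \<and> T \<subseteq> G"
        by (rule exI[of _ "W \<inter> Opn"]) (use W x Oo in \<open>auto simp: G_def\<close>)
    qed
    define C where "C = X closure_of G"
    have Co: "openin X C" using assms(2) Go unfolding extremally_disconnected_def C_def by blast
    have Cc: "closedin X C" unfolding C_def by simp
    define U where "U = (C - D) \<union> {x \<in> D. f x = 0}"
    have Usub: "U \<subseteq> topspace X" unfolding U_def using Dc Cc closedin_subset by blast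
    have AU: "A \<subseteq> U"
    proof
      fix x assume x: "x \<in> A"
      hence fx: "f x = 0" using fA by auto
      show "x \<in> U"
      proof (cases "x \<in> D")
        case True thus ?thesis using fx by (simp add: U_def)
      next
        case False
        hence "x \<in> G" using x AB fx by (auto simp: G_def Opn_def)
        hence "x \<in> C" unfolding C_def using Go
          by (meson closure_of_subset openin_subset subsetD)
        thus ?thesis using False by (simp add: U_def)
      qed
    qed
    have UB: "U \<subseteq> topspace X - B"
    proof -
      have "x \<notin> U" if x: "x \<in> B" for x
      proof
        assume xU: "x \<in> U"
        have fx: "f x = 1" using fB x by auto
        show False
        proof (cases "x \<in> D")
          case True thus False using xU fx by (simp add: U_def)
        next
          case False
          hence xO: "x \<in> Opn" using x AB by (auto simp: Opn_def)
          then obtain W where W: "openin X W" "x \<in> W" "f ` W \<subseteq> {1/2<..}"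
          proof -
            have "open {(1/2::real)<..}" "f x \<in> {1/2<..}" using fx by auto
            thus ?thesis using contO[OF xO] that unfolding continuous_at_pt_def by blast
          qed
          have "x \<in> C" using xU False by (simp add: U_def)
          then obtain y where "y \<in> G" "y \<in> W" using W unfolding C_def in_closure_of by blast
          thus False using W unfolding G_def by auto
        qed
      qed
      thus ?thesis using Usub by blast
    qed
    have discU: "discont_set X h \<subseteq> D" if h: "\<And>y. h y = (if y \<in> U then a else b)" for h a b
    proof
      fix x assume x: "x \<in> discont_set X h"
      show "x \<in> D"
      proof (rule ccontr)
        assume nD: "x \<notin> D"
        hence xO: "x \<in> Opn" using x by (auto simp: discont_set_def Opn_def)
        have "continuous_at_pt X h x"
        proof (cases "x \<in> C")
          case True
          show ?thesis
            by (rule const_cont[of X "C \<inter> Opn"]) (use True xO Co Oo h in \<open>auto simp: U_def Opn_def\<close>)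
        next
          case False
          show ?thesis
            by (rule const_cont[of X "Opn - C"]) (use False xO Cc Oo h in \<open>auto simp: U_def Opn_def\<close>)
        qed
        thus False using x by (simp add: discont_set_def)
      qed
    qed
    have inCP: "h \<in> CP X P" if h: "\<And>y. h y = (if y \<in> U then a else b)" for h a b
    proof -
      have "X closure_of discont_set X h \<subseteq> D"
        using discU[OF h] Dc by (simp add: closure_of_minimal)
      moreover have "closedin X (X closure_of discont_set X h)" by simp
      moreover have "\<forall>A\<in>P. \<forall>B. closedin X B \<and> B \<subseteq> A \<longrightarrow> B \<in> P"
        using cP unfolding closed_ideal_def by blast
      ultimately have "X closure_of discont_set X h \<in> P" using DP by blast
      thus ?thesis unfolding CP_def by simp
    qed
    define f' where "f' = (\<lambda>y. if y \<in> U then 0 else (1::real))"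
    define g' where "g' = (\<lambda>y. if y \<in> U then 1 else (0::real))"
    have 1: "f' \<in> CP X P" by (rule inCP) (simp add: f'_def)
    have 2: "g' \<in> CP X P" by (rule inCP) (simp add: g'_def)
    have 3: "U = ZP X f'" using Usub by (auto simp: ZP_def f'_def)
    have 4: "U = topspace X - ZP X g'" using Usub by (auto simp: ZP_def g'_def)
    have "tauP_clopen X P U"
      unfolding tauP_clopen_def using 1 2 3 4 by blast
    thus "\<exists>U. tauP_clopen X P U \<and> A \<subseteq> U \<and> U \<subseteq> topspace X - B" using AU UB by blast
  qed
qed

end
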